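(* For every $M\in L^2(I,\mathbb{R}^{2\times2}_{\rm sym})$ there exists a sequence $(M_n)\subset L^2(I,\mathbb{R}^{2\times2}_{\rm sym})$ with $\det M_n=0$ a.e. in $I$ for all $n$, such that $M_n\rightharpoonup M$ weakly in $L^2(I,\mathbb{R}^{2\times2}_{\rm sym})$ and $$\int_I\big[c|M_n|^2+L^\theta(M_n)\big]\,dx_1\longrightarrow\int_I\big[c|M|^2+2c|\det M|+L^\theta(M)\big]\,dx_1\quad(n\to\infty).$$
   Context: Fix constants $c_1>0$, $c_2>0$ and set $c:=c_1+c_2$. Fix $\bar A\in\mathbb{R}^{2\times2}_{\rm sym}$, $\bar e\ge 0$, $\theta\in[0,\pi)$ and $\ell>0$; let $I=(-\ell/2,\ell/2)$. Let $R_\theta=\begin{pmatrix}\cos\theta&-\sin\theta\\ \sin\theta&\cos\theta\end{pmatrix}$ and $\bar A^\theta:=R_\theta^{\rm T}\bar A R_\theta$. For matrices, $M\cdot N={\rm tr}(M^{\rm T}N)$, $|M|^2=M\cdot M$, ${\rm tr}^2M=({\rm tr}M)^2$. For $M\in\mathbb{R}^{2\times 2}_{\rm sym}$, $$L^\theta(M):=-2c_1\,M\cdot\bar A^\theta-2c_2\,{\rm tr}M\,{\rm tr}\bar A^\theta+c_1|\bar A^\theta|^2+c_2\,{\rm tr}^2\bar A^\theta+\bar e.$$ *)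

theory Defs
  imports "HOL-Analysis.Analysis"
begin

type_synonym mat2 = "real^2^2"

definition frob :: "mat2 \<Rightarrow> mat2 \<Rightarrow> real" where
  "frob M N = (\<Sum>i\<in>UNIV. \<Sum>j\<in>UNIV. M$i$j * N$i$j)"

definition fnorm2 :: "mat2 \<Rightarrow> real" where
  "fnorm2 M = frob M M"

definition tr2 :: "mat2 \<Rightarrow> real" where
  "tr2 M = M$1$1 + M$2$2"

definition rot :: "real \<Rightarrow> mat2" where
  "rot \<theta> = (\<chi> i j. if i = 1 \<and> j = 1 then cos \<theta> else if i = 1 \<and> j = 2 then - sin \<theta>
                   else if i = 2 \<and> j = 1 then sin \<theta> else cos \<theta>)"

definition Arot :: "mat2 \<Rightarrow> real \<Rightarrow> mat2" where
  "Arot A \<theta> = transpose (rot \<theta>) ** A ** rot \<theta>"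

definition Ltheta :: "real \<Rightarrow> real \<Rightarrow> mat2 \<Rightarrow> real \<Rightarrow> real \<Rightarrow> mat2 \<Rightarrow> real" where
  "Ltheta c1 c2 A e \<theta> M =
     - 2 * c1 * frob M (Arot A \<theta>) - 2 * c2 * tr2 M * tr2 (Arot A \<theta>)
     + c1 * fnorm2 (Arot A \<theta>) + c2 * (tr2 (Arot A \<theta>))^2 + e"

definition symmetric2 :: "mat2 \<Rightarrow> bool" where
  "symmetric2 M \<longleftrightarrow> transpose M = M"

definition L2sym :: "real set \<Rightarrow> (real \<Rightarrow> mat2) \<Rightarrow> bool" where
  "L2sym I M \<longleftrightarrow> M \<in> borel_measurable (lebesgue_on I)
     \<and> integrable (lebesgue_on I) (\<lambda>x. fnorm2 (M x))
     \<and> (AE x in lebesgue_on I. symmetric2 (M x))"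

definition weak_L2 :: "real set \<Rightarrow> (nat \<Rightarrow> real \<Rightarrow> mat2) \<Rightarrow> (real \<Rightarrow> mat2) \<Rightarrow> bool" where
  "weak_L2 I Ms M \<longleftrightarrow> (\<forall>g. L2sym I g \<longrightarrow>
     (\<lambda>n. integral\<^sup>L (lebesgue_on I) (\<lambda>x. frob (Ms n x) (g x)))
       \<longlonglongrightarrow> integral\<^sup>L (lebesgue_on I) (\<lambda>x. frob (M x) (g x)))"

end

theory Submission
  imports Defs
begin


definition dd :: "real \<Rightarrow> real \<Rightarrow> real \<Rightarrow> real" where "dd p q r = p*r - q^2"
definition rho :: "real \<Rightarrow> real \<Rightarrow> real \<Rightarrow> real" where "rho p q r = sqrt (((p-r)/2)^2 + q^2)"
definition den :: "real \<Rightarrow> real \<Rightarrow> real \<Rightarrow> real" where "den p q r = 4*q^2 + (r-p)^2"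
definition kap :: "real \<Rightarrow> real \<Rightarrow> real \<Rightarrow> real" where
  "kap p q r = (if den p q r = 0 then 0 else sqrt (dd p q r / den p q r))"
definition alp :: "real \<Rightarrow> real \<Rightarrow> real \<Rightarrow> real" where
  "alp p q r = (if den p q r = 0 then sqrt (dd p q r) else 2*q*kap p q r)"
definition bet :: "real \<Rightarrow> real \<Rightarrow> real \<Rightarrow> real" where "bet p q r = (r-p) * kap p q r"
definition lam1 :: "real \<Rightarrow> real \<Rightarrow> real \<Rightarrow> real" where "lam1 p q r = (p+r)/2 + rho p q r"
definition lam2 :: "real \<Rightarrow> real \<Rightarrow> real \<Rightarrow> real" where "lam2 p q r = (p+r)/2 - rho p q r"
definition tt :: "real \<Rightarrow> real \<Rightarrow> real \<Rightarrow> real" where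
  "tt p q r = (if dd p q r < 0 then lam1 p q r / (2 * rho p q r) else 1/2)"
definition Pp :: "real \<Rightarrow> real \<Rightarrow> real \<Rightarrow> real" where
  "Pp p q r = (if dd p q r < 0 then p - lam2 p q r else p + alp p q r)"
definition Pq :: "real \<Rightarrow> real \<Rightarrow> real \<Rightarrow> real" where
  "Pq p q r = (if dd p q r < 0 then q else q + bet p q r)"
definition Pr :: "real \<Rightarrow> real \<Rightarrow> real \<Rightarrow> real" where
  "Pr p q r = (if dd p q r < 0 then r - lam2 p q r else r - alp p q r)"
definition Qp :: "real \<Rightarrow> real \<Rightarrow> real \<Rightarrow> real" where
  "Qp p q r = (if dd p q r < 0 then p - lam1 p q r else p - alp p q r)"
definition Qq :: "real \<Rightarrow> real \<Rightarrow> real \<Rightarrow> real" where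
  "Qq p q r = (if dd p q r < 0 then q else q - bet p q r)"
definition Qr :: "real \<Rightarrow> real \<Rightarrow> real \<Rightarrow> real" where
  "Qr p q r = (if dd p q r < 0 then r - lam1 p q r else r + alp p q r)"

lemma rho_sq: "(rho p q r)^2 = ((p-r)/2)^2 + q^2"
  unfolding rho_def by simp

lemma neg_case:
  assumes "dd p q r < 0"
  shows "rho p q r > 0" "lam1 p q r * lam2 p q r = dd p q r"
    "lam1 p q r + lam2 p q r = p + r" "lam1 p q r - lam2 p q r = 2 * rho p q r"
    "lam1 p q r \<ge> 0" "lam1 p q r \<le> 2 * rho p q r"
    "(lam1 p q r)^2 + (lam2 p q r)^2 = p^2 + 2*q^2 + r^2"
proof -
  have r2: "(rho p q r)^2 = ((p-r)/2)^2 + q^2" by (rule rho_sq)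
  have r0: "rho p q r \<ge> 0" unfolding rho_def by simp
  have key: "(rho p q r)^2 - ((p+r)/2)^2 = - dd p q r" using r2 unfolding dd_def by (simp add: power2_eq_square field_simps)
  have "((p+r)/2)^2 \<ge> 0" by simp
  then have "(rho p q r)^2 > 0" using key assms by linarith
  then show rp: "rho p q r > 0" using r0 by (cases "rho p q r = 0") auto
  show "lam1 p q r * lam2 p q r = dd p q r" using key unfolding lam1_def lam2_def by (simp add: power2_eq_square algebra_simps)
  show "lam1 p q r + lam2 p q r = p + r" unfolding lam1_def lam2_def by simp
  show "lam1 p q r - lam2 p q r = 2 * rho p q r" unfolding lam1_def lam2_def by simp
  have "\<bar>(p+r)/2\<bar>^2 = ((p+r)/2)^2" by (rule power2_abs)
  then have "\<bar>(p+r)/2\<bar>^2 \<le> (rho p q r)^2" using key assms by linarith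
  then have "\<bar>(p+r)/2\<bar> \<le> rho p q r"
    using r0 power2_le_imp_le by blast
  then have h: "- rho p q r \<le> (p+r)/2" "(p+r)/2 \<le> rho p q r" by (simp_all only: abs_le_iff) linarith+
  then show "lam1 p q r \<ge> 0" "lam1 p q r \<le> 2 * rho p q r" unfolding lam1_def by linarith+
  show "(lam1 p q r)^2 + (lam2 p q r)^2 = p^2 + 2*q^2 + r^2"
  proof -
    have "(lam1 p q r)^2 + (lam2 p q r)^2 = (p+r)^2/2 + 2*(rho p q r)^2"
      unfolding lam1_def lam2_def by (simp add: power2_eq_square field_simps)
    also have "\<dots> = p^2 + 2*q^2 + r^2" unfolding r2 by (simp add: power2_eq_square field_simps)
    finally show ?thesis .
  qed
qed

lemma nonneg_case:
  assumes "\<not> dd p q r < 0"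
  shows "(alp p q r)^2 + (bet p q r)^2 = dd p q r"
    "alp p q r * (r - p) = 2 * q * bet p q r"
proof -
  have d0: "dd p q r \<ge> 0" using assms by simp
  show "(alp p q r)^2 + (bet p q r)^2 = dd p q r"
  proof (cases "den p q r = 0")
    case True
    then show ?thesis using d0 unfolding alp_def bet_def kap_def by simp
  next
    case False
    have "den p q r \<ge> 0" unfolding den_def by simp
    then have dp: "den p q r > 0" using False by linarith
    have "(kap p q r)^2 = dd p q r / den p q r" using False d0 dp unfolding kap_def by simp
    then have "(kap p q r)^2 * den p q r = dd p q r" using dp by simp
    then show ?thesis using False unfolding alp_def bet_def den_def by (simp add: power2_eq_square algebra_simps)
  qed
  show "alp p q r * (r - p) = 2 * q * bet p q r"
  proof (cases "den p q r = 0")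
    case True
    have "q^2 \<ge> 0" "(r-p)^2 \<ge> 0" by simp_all
    then have "q^2 = 0" "(r - p)^2 = 0" using True unfolding den_def by linarith+
    then have "q = 0" "r - p = 0" by simp_all
    then show ?thesis unfolding bet_def by simp
  next
    case False
    then show ?thesis unfolding alp_def bet_def by simp
  qed
qed

lemma tt_range: "0 \<le> tt p q r" "tt p q r \<le> 1"
  using neg_case[of p q r] unfolding tt_def by (auto simp: field_simps)

lemma detshift: "(p - b)*(r - b) - q^2 = (p*r - q^2) - b*(p+r) + b^2" for p q r b :: real
  by (simp add: power2_eq_square algebra_simps)

lemma P_det: "Pp p q r * Pr p q r - (Pq p q r)^2 = 0"
proof (cases "dd p q r < 0")
  case True
  note n = neg_case[OF True]
  define a where "a = lam1 p q r"
  define b where "b = lam2 p q r"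
  have "(p - b)*(r - b) - q^2 = a*b - b*(a+b) + b^2"
    using detshift[of p b r q] n(2,3) unfolding a_def b_def dd_def by simp
  also have "\<dots> = 0" by (simp add: power2_eq_square algebra_simps)
  finally show ?thesis using True unfolding Pp_def Pr_def Pq_def b_def by simp
next
  case False
  note n = nonneg_case[OF False]
  show ?thesis using False n unfolding Pp_def Pr_def Pq_def dd_def by (simp add: power2_eq_square algebra_simps)
qed

lemma Q_det: "Qp p q r * Qr p q r - (Qq p q r)^2 = 0"
proof (cases "dd p q r < 0")
  case True
  note n = neg_case[OF True]
  define a where "a = lam1 p q r"
  define b where "b = lam2 p q r"
  have "(p - a)*(r - a) - q^2 = a*b - a*(a+b) + a^2"
    using detshift[of p a r q] n(2,3) unfolding a_def b_def dd_def by simp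
  also have "\<dots> = 0" by (simp add: power2_eq_square algebra_simps)
  finally show ?thesis using True unfolding Qp_def Qr_def Qq_def a_def by simp
next
  case False
  note n = nonneg_case[OF False]
  show ?thesis using False n unfolding Qp_def Qr_def Qq_def dd_def by (simp add: power2_eq_square algebra_simps)
qed

lemma comb:
  "tt p q r * Pp p q r + (1 - tt p q r) * Qp p q r = p"
  "tt p q r * Pq p q r + (1 - tt p q r) * Qq p q r = q"
  "tt p q r * Pr p q r + (1 - tt p q r) * Qr p q r = r"
proof -
  have "tt p q r * Pp p q r + (1 - tt p q r) * Qp p q r = p
      \<and> tt p q r * Pq p q r + (1 - tt p q r) * Qq p q r = q
      \<and> tt p q r * Pr p q r + (1 - tt p q r) * Qr p q r = r"
  proof (cases "dd p q r < 0")
    case True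
    note n = neg_case[OF True]
    have t: "tt p q r * (2 * rho p q r) = lam1 p q r" using True n(1) unfolding tt_def by simp
    have l2: "lam2 p q r = lam1 p q r - 2 * rho p q r" using n by simp
    show ?thesis using True t unfolding Pp_def Pr_def Pq_def Qp_def Qq_def Qr_def l2
      by (simp add: algebra_simps)
  next
    case False
    then show ?thesis unfolding tt_def Pp_def Pr_def Pq_def Qp_def Qq_def Qr_def by (simp add: algebra_simps)
  qed
  then show "tt p q r * Pp p q r + (1 - tt p q r) * Qp p q r = p"
  "tt p q r * Pq p q r + (1 - tt p q r) * Qq p q r = q"
  "tt p q r * Pr p q r + (1 - tt p q r) * Qr p q r = r" by auto
qed

lemma energy_ring: "t*((p-b)^2 + 2*q^2 + (r-b)^2) + (1-t)*((p-a)^2 + 2*q^2 + (r-a)^2)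
   = p^2 + 2*q^2 + r^2 - 2*(p+r)*(t*b + (1-t)*a) + 2*(t*b^2 + (1-t)*a^2)" for t p q r a b :: real
  by (simp add: power2_eq_square algebra_simps)

lemma energy:
  "tt p q r * ((Pp p q r)^2 + 2*(Pq p q r)^2 + (Pr p q r)^2)
   + (1 - tt p q r) * ((Qp p q r)^2 + 2*(Qq p q r)^2 + (Qr p q r)^2)
   = p^2 + 2*q^2 + r^2 + 2 * \<bar>p*r - q^2\<bar>"
proof (cases "dd p q r < 0")
  case True
  note n = neg_case[OF True]
  define a where "a = lam1 p q r"
  define b where "b = lam2 p q r"
  define t where "t = tt p q r"
  define \<rho> where "\<rho> = rho p q r"
  have t: "t * (2 * \<rho>) = a" using True n(1) unfolding tt_def t_def a_def \<rho>_def by simp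
  have l2: "b = a - 2 * \<rho>" using n unfolding a_def b_def \<rho>_def by simp
  have ab: "\<bar>p*r - q^2\<bar> = - (a*b)" using True n(2) unfolding dd_def a_def b_def by simp
  have "t*b + (1-t)*a = a - t*(a - b)" by (simp add: algebra_simps)
  also have "\<dots> = a - t*(2*\<rho>)" using l2 by simp
  finally have "t*b + (1-t)*a = a - t*(2*\<rho>)" .
  then have e1: "t*b + (1-t)*a = 0" using t by simp
  have e21: "t*b^2 + (1-t)*a^2 = a^2 - t*(a-b)*(a+b)" by (simp add: power2_eq_square algebra_simps)
  have tab: "t*(a-b) = a" using t l2 by simp
  have "t*(a-b)*(a+b) = a*(a+b)" using tab by simp
  then have "t*b^2 + (1-t)*a^2 = a^2 - a*(a+b)" using e21 by simp
  then have e2: "t*b^2 + (1-t)*a^2 = - (a*b)" by (simp add: power2_eq_square algebra_simps)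
  have "t*((p-b)^2 + 2*q^2 + (r-b)^2) + (1-t)*((p-a)^2 + 2*q^2 + (r-a)^2)
        = p^2 + 2*q^2 + r^2 + 2 * \<bar>p*r - q^2\<bar>"
    unfolding energy_ring e1 e2 ab by simp
  then show ?thesis using True unfolding Pp_def Pr_def Pq_def Qp_def Qq_def Qr_def a_def b_def t_def by simp
next
  case False
  note n = nonneg_case[OF False]
  have ab: "\<bar>p*r - q^2\<bar> = dd p q r" using False unfolding dd_def by simp
  show ?thesis using False n unfolding tt_def Pp_def Pr_def Pq_def Qp_def Qq_def Qr_def ab
    by (simp add: power2_eq_square algebra_simps)
qed

lemma sqbound1: "(p - b)^2 + 2*q^2 + (r - b)^2 \<le> 6 * (p^2 + 2*q^2 + r^2)"
  if "b^2 \<le> p^2 + 2*q^2 + r^2" for p q r b :: real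
proof -
  have "(p - b)^2 \<le> 2*p^2 + 2*b^2" using zero_le_power2[of "p+b"] by (simp add: power2_eq_square algebra_simps)
  moreover have "(r - b)^2 \<le> 2*r^2 + 2*b^2" using zero_le_power2[of "r+b"] by (simp add: power2_eq_square algebra_simps)
  moreover have "q^2 \<ge> 0" "p^2 \<ge> 0" "r^2 \<ge> 0" by simp_all
  ultimately show ?thesis using that by (smt (verit))
qed

lemma lin3: "X \<le> 2*P + 2*A \<Longrightarrow> Z \<le> 2*R+2*A \<Longrightarrow> Y \<le> 2*Q+2*B \<Longrightarrow> X + 2*Y + Z \<le> 2*P+2*R+4*Q+4*(A+B)"
  for X Y Z P Q R A B :: real by (smt (verit))

lemma lin4: "2*X \<le> P + R \<Longrightarrow> Q \<ge> 0 \<Longrightarrow> P \<ge> 0 \<Longrightarrow> R \<ge> 0 \<Longrightarrow> 2*P + 2*R + 4*Q + 4*(X - Q) \<le> 6*(P + 2*Q + R)"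
  for X Q P R :: real by (smt (verit))

lemma sqbound2: "(p + a)^2 + 2*(q+b)^2 + (r - a)^2 \<le> 6 * (p^2 + 2*q^2 + r^2)"
  if "a^2 + b^2 = p*r - q^2" for p q r a b :: real
proof -
  have "(p + a)^2 \<le> 2*p^2 + 2*a^2" using zero_le_power2[of "p-a"] by (simp add: power2_eq_square algebra_simps)
  moreover have "(r - a)^2 \<le> 2*r^2 + 2*a^2" using zero_le_power2[of "r+a"] by (simp add: power2_eq_square algebra_simps)
  moreover have "(q + b)^2 \<le> 2*q^2 + 2*b^2" using zero_le_power2[of "q-b"] by (simp add: power2_eq_square algebra_simps)
  moreover have "2*(p*r) \<le> p^2 + r^2" using zero_le_power2[of "p-r"] by (simp add: power2_eq_square algebra_simps)
  moreover have "q^2 \<ge> 0" "p^2 \<ge> 0" "r^2 \<ge> 0" "a^2 \<ge> 0" "b^2 \<ge> 0" by simp_all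
  ultimately have "(p + a)^2 + 2*(q+b)^2 + (r - a)^2 \<le> 2*p^2 + 2*r^2 + 4*q^2 + 4*(a^2+b^2)"
    using lin3 by blast
  also have "\<dots> = 2*p^2 + 2*r^2 + 4*q^2 + 4*(p*r - q^2)" using that by simp
  also have "\<dots> \<le> 6 * (p^2 + 2*q^2 + r^2)" using \<open>2*(p*r) \<le> p^2 + r^2\<close> \<open>q^2 \<ge> 0\<close> \<open>p^2 \<ge> 0\<close> \<open>r^2 \<ge> 0\<close> lin4 by blast
  finally show ?thesis .
qed

lemma Pbound: "(Pp p q r)^2 + 2*(Pq p q r)^2 + (Pr p q r)^2 \<le> 6 * (p^2 + 2*q^2 + r^2)"
  and Qbound: "(Qp p q r)^2 + 2*(Qq p q r)^2 + (Qr p q r)^2 \<le> 6 * (p^2 + 2*q^2 + r^2)"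
proof -
  have "(Pp p q r)^2 + 2*(Pq p q r)^2 + (Pr p q r)^2 \<le> 6 * (p^2 + 2*q^2 + r^2)
    \<and> (Qp p q r)^2 + 2*(Qq p q r)^2 + (Qr p q r)^2 \<le> 6 * (p^2 + 2*q^2 + r^2)"
  proof (cases "dd p q r < 0")
    case True
    note n = neg_case[OF True]
    have "(lam1 p q r)^2 \<ge> 0" "(lam2 p q r)^2 \<ge> 0" by simp_all
    then have "(lam1 p q r)^2 \<le> p^2 + 2*q^2 + r^2" "(lam2 p q r)^2 \<le> p^2 + 2*q^2 + r^2"
      using n(7) by linarith+
    then show ?thesis using True sqbound1 unfolding Pp_def Pr_def Pq_def Qp_def Qq_def Qr_def by simp
  next
    case False
    note n = nonneg_case[OF False]
    have s: "(alp p q r)^2 + (bet p q r)^2 = p*r - q^2" using n(1) unfolding dd_def .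
    have s': "(-alp p q r)^2 + (-bet p q r)^2 = p*r - q^2" using s by simp
    show ?thesis using False sqbound2[OF s] sqbound2[OF s'] unfolding Pp_def Pr_def Pq_def Qp_def Qq_def Qr_def
      by simp
  qed
  then show "(Pp p q r)^2 + 2*(Pq p q r)^2 + (Pr p q r)^2 \<le> 6 * (p^2 + 2*q^2 + r^2)"
   "(Qp p q r)^2 + 2*(Qq p q r)^2 + (Qr p q r)^2 \<le> 6 * (p^2 + 2*q^2 + r^2)" by auto
qed




definition mk :: "real \<Rightarrow> real \<Rightarrow> real \<Rightarrow> mat2" where
  "mk p q r = (\<chi> i j. if i = 1 then (if j = 1 then p else q) else (if j = 1 then q else r))"

lemma one_neq_two2: "(1::2) \<noteq> 2" "(2::2) \<noteq> 1" by simp_all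

lemma mk_nth[simp]: "mk p q r $ 1 $ 1 = p" "mk p q r $ 1 $ 2 = q" "mk p q r $ 2 $ 1 = q" "mk p q r $ 2 $ 2 = r"
  unfolding mk_def by simp_all

lemma frob_expand: "frob X Y = X$1$1 * Y$1$1 + X$1$2 * Y$1$2 + X$2$1 * Y$2$1 + X$2$2 * Y$2$2"
  unfolding frob_def by (simp add: sum_2)

lemma fnorm2_expand: "fnorm2 X = (X$1$1)^2 + (X$1$2)^2 + (X$2$1)^2 + (X$2$2)^2"
  unfolding fnorm2_def frob_expand by (simp add: power2_eq_square)

lemma fnorm2_mk: "fnorm2 (mk p q r) = p^2 + 2*q^2 + r^2"
  unfolding fnorm2_expand by simp

lemma det_mk: "det (mk p q r) = p*r - q^2"
  unfolding det_2 by (simp add: power2_eq_square)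

lemma frob_mk: "frob (mk p q r) Y = p * Y$1$1 + q * (Y$1$2 + Y$2$1) + r * Y$2$2"
  unfolding frob_expand by (simp add: algebra_simps)

lemma tr2_mk: "tr2 (mk p q r) = p + r"
  unfolding tr2_def by simp

lemma mk_sym: "symmetric2 (mk p q r)"
  unfolding symmetric2_def transpose_def mk_def
  by (simp add: vec_eq_iff forall_2)

lemma sym_eq_mk: assumes "symmetric2 X" shows "X = mk (X$1$1) (X$1$2) (X$2$2)"
proof -
  have "transpose X $ 2 $ 1 = X $ 2 $ 1" using assms unfolding symmetric2_def by simp
  then have "X $ 2 $ 1 = X $ 1 $ 2" by (simp add: transpose_def)
  then show ?thesis by (simp add: vec_eq_iff forall_2)
qed

lemma Ltheta_mk: "Ltheta c1 c2 A e \<theta> (mk p q r) =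
   - 2 * c1 * (p * Arot A \<theta>$1$1 + q * (Arot A \<theta>$1$2 + Arot A \<theta>$2$1) + r * Arot A \<theta>$2$2)
   - 2 * c2 * (p + r) * tr2 (Arot A \<theta>)
   + c1 * fnorm2 (Arot A \<theta>) + c2 * (tr2 (Arot A \<theta>))^2 + e"
  unfolding Ltheta_def frob_mk tr2_mk by simp

lemma abs_mult_le_sq: "\<bar>a * b\<bar> \<le> a^2 + b^2" for a b :: real
proof -
  have "2 * \<bar>a\<bar> * \<bar>b\<bar> \<le> \<bar>a\<bar>^2 + \<bar>b\<bar>^2" using zero_le_power2[of "\<bar>a\<bar> - \<bar>b\<bar>"]
    by (simp add: power2_eq_square algebra_simps)
  moreover have "\<bar>a\<bar>^2 = a^2" "\<bar>b\<bar>^2 = b^2" by simp_all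
  ultimately have h: "2 * (\<bar>a\<bar> * \<bar>b\<bar>) \<le> a^2 + b^2" by simp
  have "\<bar>a\<bar> * \<bar>b\<bar> \<ge> 0" by simp
  then show ?thesis unfolding abs_mult using h by linarith
qed

lemma frob_bound: "\<bar>frob X Y\<bar> \<le> fnorm2 X + fnorm2 Y"
proof -
  have "\<bar>frob X Y\<bar> \<le> \<bar>X$1$1 * Y$1$1\<bar> + \<bar>X$1$2 * Y$1$2\<bar> + \<bar>X$2$1 * Y$2$1\<bar> + \<bar>X$2$2 * Y$2$2\<bar>"
    unfolding frob_expand by linarith
  also have "\<dots> \<le> fnorm2 X + fnorm2 Y"
    unfolding fnorm2_expand using abs_mult_le_sq[of "X$1$1" "Y$1$1"] abs_mult_le_sq[of "X$1$2" "Y$1$2"]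
      abs_mult_le_sq[of "X$2$1" "Y$2$1"] abs_mult_le_sq[of "X$2$2" "Y$2$2"] by linarith
  finally show ?thesis .
qed

lemma meas_nth2: "X \<in> borel_measurable N \<Longrightarrow> (\<lambda>x. X x $ i $ j) \<in> borel_measurable N"
  for X :: "'a \<Rightarrow> mat2"
proof -
  have "(\<lambda>v::mat2. v $ i $ j) \<in> borel_measurable borel"
    by (intro borel_measurable_continuous_onI continuous_intros)
  then show "X \<in> borel_measurable N \<Longrightarrow> ?thesis" using measurable_compose by blast
qed

lemma mk_lin: "mk p q r = p *\<^sub>R mk 1 0 0 + q *\<^sub>R mk 0 1 0 + r *\<^sub>R mk 0 0 1"
  unfolding mk_def by (simp add: vec_eq_iff forall_2)

lemma meas_mk: "f \<in> borel_measurable N \<Longrightarrow> g \<in> borel_measurable N \<Longrightarrow> h \<in> borel_measurable N \<Longrightarrow>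
  (\<lambda>x. mk (f x) (g x) (h x)) \<in> borel_measurable N"
  unfolding mk_lin[of "f x" "g x" "h x" for x]
  by (rule borel_measurable_add borel_measurable_scaleR borel_measurable_const | assumption)+

lemma meas_frob: "X \<in> borel_measurable N \<Longrightarrow> Y \<in> borel_measurable N \<Longrightarrow> (\<lambda>x. frob (X x) (Y x)) \<in> borel_measurable N"
  for X Y :: "'a \<Rightarrow> mat2"
  unfolding frob_expand
  by (rule borel_measurable_add borel_measurable_times | erule meas_nth2)+

lemma meas_fnorm2: "X \<in> borel_measurable N \<Longrightarrow> (\<lambda>x. fnorm2 (X x)) \<in> borel_measurable N"
  for X :: "'a \<Rightarrow> mat2"
  unfolding fnorm2_expand by (rule borel_measurable_add borel_measurable_power | erule meas_nth2)+




lemma bor_leb: "f \<in> borel_measurable borel \<Longrightarrow> f \<in> borel_measurable lebesgue"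
  by (rule measurable_completion) simp

lemma bor_leb_on: "f \<in> borel_measurable borel \<Longrightarrow> f \<in> borel_measurable (lebesgue_on S)"
  by (rule measurable_restrict_space1[OF bor_leb])

context
  fixes a b :: real and g :: "nat \<Rightarrow> real \<Rightarrow> real"
  assumes gm: "\<And>n. g n \<in> borel_measurable (lebesgue_on {a<..<b})" and gb: "\<And>n x. \<bar>g n x\<bar> \<le> 1"
begin

definition Good :: "(real \<Rightarrow> real) \<Rightarrow> bool" where
  "Good h \<longleftrightarrow> integrable (lebesgue_on {a<..<b}) h \<and>
     (\<lambda>n. \<integral>x. g n x * h x \<partial>lebesgue_on {a<..<b}) \<longlonglongrightarrow> 0"

lemma fmI: "finite_measure (lebesgue_on {a<..<b})" by (simp add: finite_measure_lebesgue_on)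

lemma gint: "integrable (lebesgue_on {a<..<b}) h \<Longrightarrow> integrable (lebesgue_on {a<..<b}) (\<lambda>x. g n x * h x)"
  by (rule Bochner_Integration.integrable_bound[where f=h])
     (auto intro!: borel_measurable_times gm AE_I2 simp: abs_mult mult_left_le_one_le gb)

lemma Good_zero: "Good (\<lambda>x. 0)" unfolding Good_def by simp

lemma Good_add: "Good f \<Longrightarrow> Good h \<Longrightarrow> Good (\<lambda>x. f x + h x)"
  unfolding Good_def
proof (elim conjE, intro conjI)
  assume fi: "integrable (lebesgue_on {a<..<b}) f" and hi: "integrable (lebesgue_on {a<..<b}) h"
    and fl: "(\<lambda>n. \<integral>x. g n x * f x \<partial>lebesgue_on {a<..<b}) \<longlonglongrightarrow> 0"
    and hl: "(\<lambda>n. \<integral>x. g n x * h x \<partial>lebesgue_on {a<..<b}) \<longlonglongrightarrow> 0"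
  show "integrable (lebesgue_on {a<..<b}) (\<lambda>x. f x + h x)" using fi hi by simp
  have "(\<integral>x. g n x * (f x + h x) \<partial>lebesgue_on {a<..<b}) =
      (\<integral>x. g n x * f x \<partial>lebesgue_on {a<..<b}) + (\<integral>x. g n x * h x \<partial>lebesgue_on {a<..<b})" for n
    using gint[OF fi, of n] gint[OF hi, of n] by (simp add: distrib_left)
  then show "(\<lambda>n. \<integral>x. g n x * (f x + h x) \<partial>lebesgue_on {a<..<b}) \<longlonglongrightarrow> 0"
    using tendsto_add[OF fl hl] by simp
qed

lemma Good_mult: "Good f \<Longrightarrow> Good (\<lambda>x. c * f x)"
  unfolding Good_def
proof (elim conjE, intro conjI)
  assume fi: "integrable (lebesgue_on {a<..<b}) f"
    and fl: "(\<lambda>n. \<integral>x. g n x * f x \<partial>lebesgue_on {a<..<b}) \<longlonglongrightarrow> 0"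
  show "integrable (lebesgue_on {a<..<b}) (\<lambda>x. c * f x)" using fi by simp
  have "(\<integral>x. g n x * (c * f x) \<partial>lebesgue_on {a<..<b}) = c * (\<integral>x. g n x * f x \<partial>lebesgue_on {a<..<b})" for n
    by (simp add: algebra_simps)
  then show "(\<lambda>n. \<integral>x. g n x * (c * f x) \<partial>lebesgue_on {a<..<b}) \<longlonglongrightarrow> 0"
    using tendsto_mult_right_zero[OF fl, of c] by simp
qed

lemma Good_cong: "Good f \<Longrightarrow> integrable (lebesgue_on {a<..<b}) h \<Longrightarrow> AE x in lebesgue_on {a<..<b}. f x = h x \<Longrightarrow> Good h"
  unfolding Good_def
proof (elim conjE, intro conjI)
  assume fi: "integrable (lebesgue_on {a<..<b}) f" and hi: "integrable (lebesgue_on {a<..<b}) h"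
    and ae: "AE x in lebesgue_on {a<..<b}. f x = h x"
    and fl: "(\<lambda>n. \<integral>x. g n x * f x \<partial>lebesgue_on {a<..<b}) \<longlonglongrightarrow> 0"
  show "integrable (lebesgue_on {a<..<b}) h" by (rule hi)
  have "(\<integral>x. g n x * f x \<partial>lebesgue_on {a<..<b}) = (\<integral>x. g n x * h x \<partial>lebesgue_on {a<..<b})" for n
    by (rule integral_cong_AE) (use gint[OF fi] gint[OF hi] ae in auto)
  then show "(\<lambda>n. \<integral>x. g n x * h x \<partial>lebesgue_on {a<..<b}) \<longlonglongrightarrow> 0" using fl by simp
qed

lemma Good_L1lim:
  assumes sG: "\<And>k. Good (s k)" and fi: "integrable (lebesgue_on {a<..<b}) f"
    and L1: "(\<lambda>k. \<integral>x. \<bar>s k x - f x\<bar> \<partial>lebesgue_on {a<..<b}) \<longlonglongrightarrow> 0"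
  shows "Good f"
  unfolding Good_def
proof (intro conjI fi)
  let ?\<mu> = "lebesgue_on {a<..<b}"
  have si: "integrable ?\<mu> (s k)" for k using sG unfolding Good_def by auto
  have sl: "(\<lambda>n. \<integral>x. g n x * s k x \<partial>?\<mu>) \<longlonglongrightarrow> 0" for k using sG unfolding Good_def by auto
  show "(\<lambda>n. \<integral>x. g n x * f x \<partial>?\<mu>) \<longlonglongrightarrow> 0"
  proof (rule LIMSEQ_I)
    fix r :: real assume r: "0 < r"
    obtain k where k: "\<bar>\<integral>x. \<bar>s k x - f x\<bar> \<partial>?\<mu>\<bar> < r/2"
      using LIMSEQ_D[OF L1, of "r/2"] r by auto
    obtain n0 where n0: "\<And>n. n \<ge> n0 \<Longrightarrow> \<bar>\<integral>x. g n x * s k x \<partial>?\<mu>\<bar> < r/2"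
      using LIMSEQ_D[OF sl[of k], of "r/2"] r by auto
    show "\<exists>n0. \<forall>n\<ge>n0. norm ((\<integral>x. g n x * f x \<partial>?\<mu>) - 0) < r"
    proof (intro exI allI impI)
      fix n assume n: "n \<ge> n0"
      have dif: "integrable ?\<mu> (\<lambda>x. s k x - f x)" using si fi by simp
      have "(\<integral>x. g n x * s k x \<partial>?\<mu>) - (\<integral>x. g n x * (s k x - f x) \<partial>?\<mu>)
          = (\<integral>x. g n x * s k x - g n x * (s k x - f x) \<partial>?\<mu>)"
        by (rule Bochner_Integration.integral_diff[symmetric, OF gint[OF si[of k]] gint[OF dif]])
      also have "\<dots> = (\<integral>x. g n x * f x \<partial>?\<mu>)" by (simp add: algebra_simps)
      finally have "(\<integral>x. g n x * f x \<partial>?\<mu>) = (\<integral>x. g n x * s k x \<partial>?\<mu>) - (\<integral>x. g n x * (s k x - f x) \<partial>?\<mu>)" by simp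
      moreover have "\<bar>\<integral>x. g n x * (s k x - f x) \<partial>?\<mu>\<bar> \<le> (\<integral>x. \<bar>s k x - f x\<bar> \<partial>?\<mu>)"
      proof -
        have "\<bar>\<integral>x. g n x * (s k x - f x) \<partial>?\<mu>\<bar> \<le> (\<integral>x. \<bar>g n x * (s k x - f x)\<bar> \<partial>?\<mu>)"
          by (rule integral_abs_bound)
        also have "\<dots> \<le> (\<integral>x. \<bar>s k x - f x\<bar> \<partial>?\<mu>)"
          by (rule integral_mono[OF integrable_abs[OF gint[OF dif, of n]] integrable_abs[OF dif]])
             (use gb in \<open>auto simp: abs_mult mult_left_le_one_le\<close>)
        finally show ?thesis .
      qed
      ultimately show "norm ((\<integral>x. g n x * f x \<partial>?\<mu>) - 0) < r"
        using n0[OF n] k by (simp add: abs_le_iff) linarith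
    qed
  qed
qed

lemma L1_dct:
  fixes s :: "nat \<Rightarrow> real \<Rightarrow> real" and f w :: "real \<Rightarrow> real"
  assumes sm: "\<And>k. s k \<in> borel_measurable (lebesgue_on {a<..<b})" and fm: "f \<in> borel_measurable (lebesgue_on {a<..<b})"
    and wi: "integrable (lebesgue_on {a<..<b}) w"
    and lim: "\<And>x. x \<in> {a<..<b} \<Longrightarrow> (\<lambda>k. s k x) \<longlonglongrightarrow> f x"
    and bd: "\<And>k x. x \<in> {a<..<b} \<Longrightarrow> \<bar>s k x - f x\<bar> \<le> w x"
  shows "(\<lambda>k. \<integral>x. \<bar>s k x - f x\<bar> \<partial>lebesgue_on {a<..<b}) \<longlonglongrightarrow> 0"
proof -
  have "(\<lambda>k. \<integral>x. \<bar>s k x - f x\<bar> \<partial>lebesgue_on {a<..<b}) \<longlonglongrightarrow> (\<integral>x. 0 \<partial>lebesgue_on {a<..<b})"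
  proof (rule integral_dominated_convergence[where w=w])
    show "(\<lambda>x. 0::real) \<in> borel_measurable (lebesgue_on {a<..<b})" by simp
    show "(\<lambda>x. \<bar>s k x - f x\<bar>) \<in> borel_measurable (lebesgue_on {a<..<b})" for k using sm fm by measurable
    show "integrable (lebesgue_on {a<..<b}) w" by (rule wi)
    show "AE x in lebesgue_on {a<..<b}. (\<lambda>k. \<bar>s k x - f x\<bar>) \<longlonglongrightarrow> 0"
    proof (rule AE_I2)
      fix x assume "x \<in> space (lebesgue_on {a<..<b})"
      then have "x \<in> {a<..<b}" by simp
      then have "(\<lambda>k. s k x - f x) \<longlonglongrightarrow> 0" using lim by (simp add: LIM_zero)
      then show "(\<lambda>k. \<bar>s k x - f x\<bar>) \<longlonglongrightarrow> 0" by (simp add: tendsto_rabs_zero)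
    qed
    show "AE x in lebesgue_on {a<..<b}. norm \<bar>s k x - f x\<bar> \<le> w x" for k
      using bd by (intro AE_I2) simp
  qed
  then show ?thesis by simp
qed

lemma ind_int: "A \<in> sets borel \<Longrightarrow> integrable (lebesgue_on {a<..<b}) (indicator A :: real \<Rightarrow> real)"
  by (rule finite_measure.integrable_const_bound[OF fmI, where B=1])
     (auto intro!: bor_leb_on[OF borel_measurable_indicator])

lemma Good_one: assumes basic: "\<And>y. Good (indicator {..y})" shows "Good (\<lambda>x. 1)"
proof (rule Good_cong[OF basic[of b]])
  show "integrable (lebesgue_on {a<..<b}) (\<lambda>x. 1::real)" using finite_measure.integrable_const[OF fmI] .
  show "AE x in lebesgue_on {a<..<b}. indicator {..b} x = (1::real)" by (intro AE_I2) auto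
qed

lemma Good_borel:
  assumes basic: "\<And>y. Good (indicator {..y})" and A: "A \<in> sets borel"
  shows "Good (indicator A)"
proof -
  have beq: "(borel::real measure) = sigma UNIV (range atMost)" by (rule borel_eq_atMost)
  have "sets (borel::real measure) = sets (sigma UNIV (range (atMost::real \<Rightarrow> real set)))"
    using beq by (rule arg_cong)
  also have "\<dots> = sigma_sets UNIV (range atMost)" by (rule sets_measure_of) simp
  finally have sb: "sets borel = sigma_sets UNIV (range (atMost::real \<Rightarrow> real set))" .
  have Asig: "A \<in> sigma_sets UNIV (range (atMost :: real \<Rightarrow> real set))" using A sb by simp
  have ist: "Int_stable (range (atMost :: real \<Rightarrow> real set))"
    unfolding Int_stable_def by (auto intro!: image_eqI[where x="min _ _"])
  have clo: "range (atMost :: real \<Rightarrow> real set) \<subseteq> Pow UNIV" by simp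
  from ist clo Asig show ?thesis
  proof (induction rule: sigma_sets_induct_disjoint[where P="\<lambda>A. Good (indicator A)"])
    case (basic A)
    then obtain y where "A = {..y}" by auto
    then show ?case using assms(1) by simp
  next
    case empty
    have "indicator {} = (\<lambda>x::real. 0::real)" by (rule ext) simp
    then show ?case using Good_zero by simp
  next
    case (compl A)
    have "Good (\<lambda>x. 1 + (-1) * indicator A x)"
      by (intro Good_add Good_one[OF basic] Good_mult compl.IH)
    moreover have "(\<lambda>x. 1 + (-1) * indicator A x) = (indicator (UNIV - A) :: real \<Rightarrow> real)"
      by (auto simp: indicator_def)
    ultimately show ?case by simp
  next
    case (union A)
    have Ab: "A i \<in> sets borel" for i using union.hyps(2) sb by auto
    define s where "s k = (indicator (\<Union>i<k. A i) :: real \<Rightarrow> real)" for k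
    have sG: "Good (s k)" for k
    proof (induction k)
      case 0
      have "s 0 = (\<lambda>x::real. 0::real)" unfolding s_def by (rule ext) simp
      then show ?case using Good_zero by simp
    next
      case (Suc k)
      have disj: "A k \<inter> (\<Union>i<k. A i) = {}"
      proof -
        have "A k \<inter> A i = {}" if "i < k" for i
          using union.hyps(1) that unfolding disjoint_family_on_def by (metis UNIV_I less_irrefl)
        then show ?thesis by auto
      qed
      have "s (Suc k) = (\<lambda>x. indicator (A k) x + s k x)"
        unfolding s_def lessThan_Suc UN_insert by (rule ext) (rule indicator_disj_union[OF disj])
      then show ?case using Good_add[OF union.IH[of k] Suc.IH] by simp
    qed
    have Ub: "(\<Union>i. A i) \<in> sets borel" using Ab by auto
    have sb': "(\<Union>i<k. A i) \<in> sets borel" for k using Ab by auto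
    show ?case
    proof (rule Good_L1lim[OF sG ind_int[OF Ub]])
      show "(\<lambda>k. \<integral>x. \<bar>s k x - indicator (\<Union>i. A i) x\<bar> \<partial>lebesgue_on {a<..<b}) \<longlonglongrightarrow> 0"
      proof (rule L1_dct[where w="\<lambda>x. 1"])
        show "s k \<in> borel_measurable (lebesgue_on {a<..<b})" for k
          unfolding s_def by (intro bor_leb_on borel_measurable_indicator sb')
        show "(indicator (\<Union>i. A i) :: real \<Rightarrow> real) \<in> borel_measurable (lebesgue_on {a<..<b})"
          by (intro bor_leb_on borel_measurable_indicator Ub)
        show "integrable (lebesgue_on {a<..<b}) (\<lambda>x. 1::real)" using finite_measure.integrable_const[OF fmI] .
        show "(\<lambda>k. s k x) \<longlonglongrightarrow> indicator (\<Union>i. A i) x" for x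
          unfolding s_def by (rule LIMSEQ_indicator_UN)
        show "\<bar>s k x - indicator (\<Union>i. A i) x\<bar> \<le> 1" for k x
          unfolding s_def by (auto simp: indicator_def)
      qed
    qed
  qed
qed

lemma Good_leb:
  assumes basic: "\<And>y. Good (indicator {..y})" and A: "A \<in> sets (lebesgue_on {a<..<b})"
  shows "Good (indicator A)"
proof -
  have Il: "{a<..<b} \<inter> space lebesgue \<in> sets lebesgue" by simp
  have Al: "A \<in> sets (completion lborel)" using A sets_restrict_space_iff[OF Il] by auto
  obtain S N0 N' where AS: "A = S \<union> N0" and NN: "N0 \<subseteq> N'" and Nn: "N' \<in> null_sets lborel" and S: "S \<in> sets lborel"
    using sets_completionE[OF Al] by metis
  have GS: "Good (indicator S)" using Good_borel[OF basic] S by simp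
  have "AE x in lborel. x \<notin> N'" using Nn by (rule AE_not_in)
  then have "AE x in lebesgue. x \<notin> N'" by (rule AE_completion)
  then have "AE x in lebesgue_on {a<..<b}. x \<notin> N'"
    using AE_restrict_space_iff[OF Il] by (auto elim: AE_mp)
  then have ae: "AE x in lebesgue_on {a<..<b}. indicator S x = (indicator A x :: real)"
    by eventually_elim (use AS NN in \<open>auto simp: indicator_def\<close>)
  have "integrable (lebesgue_on {a<..<b}) (indicator A :: real \<Rightarrow> real)"
    by (rule finite_measure.integrable_const_bound[OF fmI, where B=1])
       (use A in \<open>auto intro!: borel_measurable_indicator\<close>)
  then show ?thesis using Good_cong[OF GS _ ae] by simp
qed

lemma Good_all:
  assumes basic: "\<And>y. Good (indicator {..y})" and hi: "integrable (lebesgue_on {a<..<b}) h"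
  shows "Good h"
  using hi
proof (induction rule: integrable_induct)
  case (base A c)
  have "Good (\<lambda>x. c * indicator A x)" by (rule Good_mult[OF Good_leb[OF basic base(1)]])
  then show ?case by (simp add: mult.commute)
next
  case (add f h)
  then show ?case by (simp add: Good_add)
next
  case (lim f s)
  show ?case
  proof (rule Good_L1lim[OF lim.IH lim.hyps(4)])
    show "(\<lambda>k. \<integral>x. \<bar>s k x - f x\<bar> \<partial>lebesgue_on {a<..<b}) \<longlonglongrightarrow> 0"
    proof (rule L1_dct[where w="\<lambda>x. 3 * \<bar>f x\<bar>"])
      show "s k \<in> borel_measurable (lebesgue_on {a<..<b})" for k using lim.hyps(1) by auto
      show "f \<in> borel_measurable (lebesgue_on {a<..<b})" using lim.hyps(4) by auto
      show "integrable (lebesgue_on {a<..<b}) (\<lambda>x. 3 * \<bar>f x\<bar>)" using lim.hyps(4) by auto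
      show "(\<lambda>k. s k x) \<longlonglongrightarrow> f x" if "x \<in> {a<..<b}" for x using lim.hyps(2) that by simp
      show "\<bar>s k x - f x\<bar> \<le> 3 * \<bar>f x\<bar>" if "x \<in> {a<..<b}" for k x
        using lim.hyps(3)[of x k] that by simp
    qed
  qed
qed

end





lemma int_on_bdd:
  fixes f :: "real \<Rightarrow> real"
  assumes "f \<in> borel_measurable lebesgue" "\<And>x. \<bar>f x\<bar> \<le> B"
  shows "f integrable_on {u..v}"
  by (rule measurable_bounded_by_integrable_imp_integrable_real[where g="\<lambda>x. B"])
     (use assms in \<open>auto intro: measurable_restrict_space1\<close>)

lemma integral_refl_real: "integral {a..a::real} f = 0"
  by simp

lemma content_real_ivl: "u \<le> v \<Longrightarrow> Henstock_Kurzweil_Integration.content {u..v::real} = v - u"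
  by simp

lemma partA:
  fixes a N :: real and t0 :: "real \<Rightarrow> real"
  assumes t0m: "t0 \<in> borel_measurable lebesgue" and t01: "\<And>x. 0 \<le> t0 x" "\<And>x. t0 x \<le> 1" and N: "N > 0"
  defines "T \<equiv> \<lambda>y. integral {a..y} t0"
  defines "cc \<equiv> \<lambda>x. a + real_of_int \<lfloor>(x - a) * N\<rfloor> / N"
  defines "X \<equiv> \<lambda>x. if x - cc x < T (cc x + 1/N) - T (cc x) then 1 else (0::real)"
  shows "X \<in> borel_measurable borel" "\<And>y. y \<ge> a \<Longrightarrow> \<bar>integral {a..y} X - T y\<bar> \<le> 1/N"
proof -
  have t0i: "t0 integrable_on {u..v}" for u v
    by (rule int_on_bdd[OF t0m, of 1]) (use t01 in \<open>simp add: abs_le_iff\<close>)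
  have Tmono: "T u \<le> T v" if "u \<le> v" for u v
  proof (cases "u < a")
    case True
    then have "T u = 0" unfolding T_def by simp
    moreover have "T v \<ge> 0" unfolding T_def by (rule integral_nonneg[OF t0i]) (use t01 in auto)
    ultimately show ?thesis by simp
  next
    case False
    have "T u + integral {u..v} t0 = T v" unfolding T_def
      by (rule Henstock_Kurzweil_Integration.integral_combine) (use False that t0i in auto)
    moreover have "integral {u..v} t0 \<ge> 0" by (rule integral_nonneg[OF t0i]) (use t01 in auto)
    ultimately show ?thesis by simp
  qed
  have Tlip: "T v - T u \<le> v - u" if "a \<le> u" "u \<le> v" for u v
  proof -
    have "T u + integral {u..v} t0 = T v" unfolding T_def
      by (rule Henstock_Kurzweil_Integration.integral_combine) (use that t0i in auto)
    moreover have "integral {u..v} t0 \<le> integral {u..v} (\<lambda>x. 1::real)"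
      by (rule integral_le[OF t0i]) (use t01 in auto)
    moreover have "integral {u..v} (\<lambda>x. 1::real) = v - u" using that by simp
    ultimately show ?thesis by simp
  qed
  have Tm: "T \<in> borel_measurable borel"
    by (rule borel_measurable_mono) (auto simp: mono_def Tmono)
  have flm: "(\<lambda>x. real_of_int \<lfloor>(x - a) * N\<rfloor>) \<in> borel_measurable borel"
    using measurable_compose[OF _ borel_measurable_real_floor, of "\<lambda>x. (x - a) * N" borel] by simp
  have ccm: "cc \<in> borel_measurable borel" unfolding cc_def using flm by measurable
  show Xm: "X \<in> borel_measurable borel"
    unfolding X_def using ccm Tm by measurable
  have Xi: "X integrable_on {u..v}" for u v
    by (rule int_on_bdd[OF bor_leb[OF Xm], of 1]) (simp add: X_def)
  have Xnn: "0 \<le> X x" for x by (simp add: X_def)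
  define c where "c k = a + real k / N" for k :: nat
  have cS: "c (Suc k) = c k + 1/N" for k unfolding c_def using N by (simp add: field_simps)
  have ca: "c k \<ge> a" for k unfolding c_def using N by simp
  have cc_eq: "cc x = c k" if "c k \<le> x" "x < c (Suc k)" for k x
  proof -
    have "real k \<le> (x - a) * N" using that(1) N unfolding c_def by (simp add: field_simps)
    moreover have "(x - a) * N < real k + 1" using that(2) N unfolding c_def by (simp add: field_simps)
    ultimately have "\<lfloor>(x - a) * N\<rfloor> = int k" by (simp add: floor_eq_iff)
    then show ?thesis unfolding cc_def c_def by simp
  qed
  define m where "m u = T (u + 1/N) - T u" for u
  have m01: "0 \<le> m u" "m u \<le> 1/N" if "a \<le> u" for u
    unfolding m_def using Tmono[of u "u + 1/N"] Tlip[of u "u + 1/N"] that N by auto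
  have cell: "integral {c k..c (Suc k)} X = m (c k)" for k
  proof -
    define u where "u = c k"
    define w where "w = u + m u"
    define v where "v = c (Suc k)"
    have uw: "u \<le> w" and wv: "w \<le> v" and v: "v = u + 1/N"
      using m01[OF ca[of k]] cS[of k] unfolding u_def w_def v_def by auto
    have "integral {u..w} X + integral {w..v} X = integral {u..v} X"
      by (rule Henstock_Kurzweil_Integration.integral_combine[OF uw wv Xi])
    moreover have "integral {u..w} X = integral {u..w} (\<lambda>x. 1::real)"
    proof (rule integral_spike[of "{w, v}"])
      show "negligible {w, v}" by (rule negligible_finite) simp
      fix x assume x: "x \<in> {u..w} - {w, v}"
      then have "cc x = u" using cc_eq[of k x] wv unfolding u_def v_def by auto
      then show "1 = X x" using x unfolding X_def m_def[symmetric] w_def by auto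
    qed
    moreover have "integral {u..w} (\<lambda>x. 1::real) = m u" using uw unfolding w_def by simp
    moreover have "integral {w..v} X = integral {w..v} (\<lambda>x. 0::real)"
    proof (rule integral_spike[of "{w, v}"])
      show "negligible {w, v}" by (rule negligible_finite) simp
      fix x assume x: "x \<in> {w..v} - {w, v}"
      then have "cc x = u" using cc_eq[of k x] uw unfolding u_def v_def by auto
      then show "0 = X x" using x unfolding X_def m_def[symmetric] w_def by auto
    qed
    ultimately show ?thesis unfolding u_def v_def by simp
  qed
  have Fc: "integral {a..c k} X = T (c k)" for k
  proof (induction k)
    case 0
    then show ?case unfolding T_def c_def by (simp add: integral_refl_real)
  next
    case (Suc k)
    have "integral {a..c k} X + integral {c k..c (Suc k)} X = integral {a..c (Suc k)} X"
      by (rule Henstock_Kurzweil_Integration.integral_combine[OF ca]) (use cS N Xi in auto)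
    then show ?case using Suc cell[of k] unfolding m_def cS[symmetric] by simp
  qed
  have Fmono: "integral {a..u} X \<le> integral {a..v} X" if "a \<le> u" "u \<le> v" for u v
  proof -
    have "integral {a..u} X + integral {u..v} X = integral {a..v} X"
      by (rule Henstock_Kurzweil_Integration.integral_combine) (use that Xi in auto)
    moreover have "integral {u..v} X \<ge> 0" by (rule integral_nonneg[OF Xi]) (use Xnn in auto)
    ultimately show ?thesis by simp
  qed
  fix y assume y: "y \<ge> a"
  define k where "k = nat \<lfloor>(y - a) * N\<rfloor>"
  have "(y - a) * N \<ge> 0" using y N by simp
  then have kk: "real k \<le> (y - a) * N" "(y - a) * N < real k + 1"
    unfolding k_def by linarith+
  have ck: "c k \<le> y" using kk(1) N unfolding c_def by (simp add: field_simps)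
  have ck1: "y \<le> c (Suc k)" using kk(2) N unfolding c_def by (simp add: field_simps)
  have "T (c k) \<le> integral {a..y} X" using Fmono[OF ca ck] Fc by simp
  moreover have "integral {a..y} X \<le> T (c (Suc k))" using Fmono[OF y ck1] Fc by simp
  moreover have "T (c k) \<le> T y" "T y \<le> T (c (Suc k))" using Tmono ck ck1 by auto
  moreover have "T (c (Suc k)) - T (c k) \<le> 1/N" using Tlip[of "c k" "c (Suc k)"] ca[of k] cS[of k] N by simp
  ultimately show "\<bar>integral {a..y} X - T y\<bar> \<le> 1/N" by (simp add: abs_le_iff)
qed




lemma osc:
  fixes a b :: real and t :: "real \<Rightarrow> real"
  assumes tm: "t \<in> borel_measurable (lebesgue_on {a<..<b})" and t0: "\<And>x. 0 \<le> t x" and t1: "\<And>x. t x \<le> 1"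
  obtains chi :: "nat \<Rightarrow> real \<Rightarrow> bool" where
    "\<And>n. Measurable.pred (lebesgue_on {a<..<b}) (chi n)"
    "\<And>h. integrable (lebesgue_on {a<..<b}) h \<Longrightarrow>
       (\<lambda>n. \<integral>x. (if chi n x then h x else 0) \<partial>lebesgue_on {a<..<b})
         \<longlonglongrightarrow> (\<integral>x. t x * h x \<partial>lebesgue_on {a<..<b})"
proof -
  let ?I = "{a<..<b}"
  let ?\<mu> = "lebesgue_on {a<..<b}"
  define tz where "tz x = (if x \<in> ?I then t x else 0)" for x
  have tzm: "tz \<in> borel_measurable lebesgue"
    unfolding tz_def using borel_measurable_if[of ?I t] tm by simp
  have tz01: "0 \<le> tz x" "tz x \<le> 1" for x unfolding tz_def using t0 t1 by auto
  define T where "T y = integral {a..y} tz" for y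
  define cc where "cc n x = a + real_of_int \<lfloor>(x - a) * real (Suc n)\<rfloor> / real (Suc n)" for n x
  define chi where "chi n x = (x - cc n x < T (cc n x + 1/real (Suc n)) - T (cc n x))" for n x
  define X where "X n x = (if chi n x then 1 else (0::real))" for n x
  have pA: "X n \<in> borel_measurable borel" "\<And>y. y \<ge> a \<Longrightarrow> \<bar>integral {a..y} (X n) - T y\<bar> \<le> 1/real (Suc n)" for n
    using partA[of tz "real (Suc n)" a, OF tzm tz01] unfolding X_def chi_def cc_def T_def by auto
  have chim: "Measurable.pred ?\<mu> (chi n)" for n
  proof -
    have "Measurable.pred ?\<mu> (\<lambda>x. 1/2 < X n x)" using bor_leb_on[OF pA(1)[of n]] by measurable
    moreover have "(\<lambda>x. 1/2 < X n x) = chi n" unfolding X_def by (rule ext) simp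
    ultimately show ?thesis by simp
  qed
  define g where "g n x = X n x - t x" for n x
  have gm: "g n \<in> borel_measurable ?\<mu>" for n
    unfolding g_def using bor_leb_on[OF pA(1)[of n]] tm by (rule borel_measurable_diff)
  have gb: "\<bar>g n x\<bar> \<le> 1" for n x unfolding g_def X_def using t0[of x] t1[of x] by auto
  note G = Good_all[where a=a and b=b and g=g, OF gm gb]
  have basic: "Good a b g (indicator {..y})" for y
    unfolding Good_def[OF gm gb]
  proof
    show "integrable ?\<mu> (indicator {..y} :: real \<Rightarrow> real)" by (rule ind_int[where a=a and b=b and g=g, OF gm gb]) simp
    define y' where "y' = max a (min y b)"
    have ya: "a \<le> y'" unfolding y'_def by simp
    have Xi: "X n integrable_on {u..v}" for n u v
      by (rule int_on_bdd[OF bor_leb[OF pA(1)], of _ 1]) (simp add: X_def)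
    have tzi: "tz integrable_on {u..v}" for u v
      by (rule int_on_bdd[OF tzm, of 1]) (use tz01 in \<open>simp add: abs_le_iff\<close>)
    have eq: "(\<integral>x. g n x * indicator {..y} x \<partial>?\<mu>) = integral {a..y'} (X n) - T y'" for n
    proof -
      have "integrable ?\<mu> (\<lambda>x. g n x * indicator {..y} x)"
        by (rule gint[where a=a and b=b and g=g, OF gm gb]) (rule ind_int[where a=a and b=b and g=g, OF gm gb], simp)
      then have "(\<integral>x. g n x * indicator {..y} x \<partial>?\<mu>) = integral ?I (\<lambda>x. g n x * indicator {..y} x)"
        by (rule lebesgue_integral_eq_integral) simp
      also have "\<dots> = integral ?I (\<lambda>x. if x \<in> {..y} then X n x - tz x else 0)"
        by (rule Henstock_Kurzweil_Integration.integral_cong) (auto simp: g_def tz_def indicator_def)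
      also have "\<dots> = integral ({..y} \<inter> ?I) (\<lambda>x. X n x - tz x)"
        by (rule integral_restrict_Int)
      also have "\<dots> = integral {a..y'} (\<lambda>x. X n x - tz x)"
      proof (rule integral_spike_set)
        have "{x \<in> {..y} \<inter> ?I - {a..y'}. X n x - tz x \<noteq> 0} \<subseteq> {a, b}"
          unfolding y'_def by auto
        then show "negligible {x \<in> {..y} \<inter> ?I - {a..y'}. X n x - tz x \<noteq> 0}"
          by (rule negligible_subset[rotated]) (rule negligible_finite, simp)
        have "{x \<in> {a..y'} - {..y} \<inter> ?I. X n x - tz x \<noteq> 0} \<subseteq> {a, b}"
          unfolding y'_def by auto
        then show "negligible {x \<in> {a..y'} - {..y} \<inter> ?I. X n x - tz x \<noteq> 0}"
          by (rule negligible_subset[rotated]) (rule negligible_finite, simp)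
      qed
      also have "\<dots> = integral {a..y'} (X n) - T y'"
        unfolding T_def by (rule Henstock_Kurzweil_Integration.integral_diff[OF Xi tzi])
      finally show ?thesis .
    qed
    show "(\<lambda>n. \<integral>x. g n x * indicator {..y} x \<partial>?\<mu>) \<longlonglongrightarrow> 0"
    proof (rule Lim_null_comparison[OF _ LIMSEQ_inverse_real_of_nat])
      show "\<forall>\<^sub>F n in sequentially. norm (\<integral>x. g n x * indicator {..y} x \<partial>?\<mu>) \<le> inverse (real (Suc n))"
        using pA(2)[OF ya] unfolding eq by (simp add: inverse_eq_divide)
    qed
  qed
  show ?thesis
  proof (rule that[of chi])
    show "Measurable.pred ?\<mu> (chi n)" for n by (rule chim)
    fix h :: "real \<Rightarrow> real" assume hi: "integrable ?\<mu> h"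
    have Gh: "(\<lambda>n. \<integral>x. g n x * h x \<partial>?\<mu>) \<longlonglongrightarrow> 0"
      using G[OF basic hi] unfolding Good_def[OF gm gb] by simp
    have thi: "integrable ?\<mu> (\<lambda>x. t x * h x)"
      by (rule Bochner_Integration.integrable_bound[OF hi])
         (use tm hi t0 t1 in \<open>auto intro!: AE_I2 simp: abs_mult mult_left_le_one_le\<close>)
    have "(\<integral>x. (if chi n x then h x else 0) \<partial>?\<mu>) = (\<integral>x. t x * h x + g n x * h x \<partial>?\<mu>)" for n
      by (rule Bochner_Integration.integral_cong) (auto simp: g_def X_def algebra_simps)
    also have "\<dots> n = (\<integral>x. t x * h x \<partial>?\<mu>) + (\<integral>x. g n x * h x \<partial>?\<mu>)" for n
      by (rule Bochner_Integration.integral_add[OF thi gint[OF gm gb hi]])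
    finally have eqn: "(\<integral>x. (if chi n x then h x else 0) \<partial>?\<mu>) = (\<integral>x. t x * h x \<partial>?\<mu>) + (\<integral>x. g n x * h x \<partial>?\<mu>)" for n .
    show "(\<lambda>n. \<integral>x. (if chi n x then h x else 0) \<partial>?\<mu>) \<longlonglongrightarrow> (\<integral>x. t x * h x \<partial>?\<mu>)"
      unfolding eqn using tendsto_add[OF tendsto_const Gh] by simp
  qed
qed




context
  fixes N :: "'a measure" and p q r :: "'a \<Rightarrow> real"
  assumes [measurable]: "p \<in> borel_measurable N" "q \<in> borel_measurable N" "r \<in> borel_measurable N"
begin
lemma m_dd[measurable]: "(\<lambda>x. dd (p x) (q x) (r x)) \<in> borel_measurable N" unfolding dd_def by measurable
lemma m_rho[measurable]: "(\<lambda>x. rho (p x) (q x) (r x)) \<in> borel_measurable N" unfolding rho_def by measurable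
lemma m_den[measurable]: "(\<lambda>x. den (p x) (q x) (r x)) \<in> borel_measurable N" unfolding den_def by measurable
lemma m_kap[measurable]: "(\<lambda>x. kap (p x) (q x) (r x)) \<in> borel_measurable N" unfolding kap_def by measurable
lemma m_alp[measurable]: "(\<lambda>x. alp (p x) (q x) (r x)) \<in> borel_measurable N" unfolding alp_def by measurable
lemma m_bet[measurable]: "(\<lambda>x. bet (p x) (q x) (r x)) \<in> borel_measurable N" unfolding bet_def by measurable
lemma m_lam1[measurable]: "(\<lambda>x. lam1 (p x) (q x) (r x)) \<in> borel_measurable N" unfolding lam1_def by measurable
lemma m_lam2[measurable]: "(\<lambda>x. lam2 (p x) (q x) (r x)) \<in> borel_measurable N" unfolding lam2_def by measurable
lemma meas_ppp:
  shows "(\<lambda>x. tt (p x) (q x) (r x)) \<in> borel_measurable N"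
    "(\<lambda>x. Pp (p x) (q x) (r x)) \<in> borel_measurable N"
    "(\<lambda>x. Pq (p x) (q x) (r x)) \<in> borel_measurable N"
    "(\<lambda>x. Pr (p x) (q x) (r x)) \<in> borel_measurable N"
    "(\<lambda>x. Qp (p x) (q x) (r x)) \<in> borel_measurable N"
    "(\<lambda>x. Qq (p x) (q x) (r x)) \<in> borel_measurable N"
    "(\<lambda>x. Qr (p x) (q x) (r x)) \<in> borel_measurable N"
  unfolding tt_def Pp_def Pq_def Pr_def Qp_def Qq_def Qr_def
  by measurable
end

definition LC :: "real \<Rightarrow> real \<Rightarrow> mat2 \<Rightarrow> real \<Rightarrow> real \<Rightarrow> real" where
  "LC c1 c2 A e \<theta> = c1 * fnorm2 (Arot A \<theta>) + c2 * (tr2 (Arot A \<theta>))^2 + e"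
definition L1 :: "real \<Rightarrow> real \<Rightarrow> mat2 \<Rightarrow> real \<Rightarrow> real" where
  "L1 c1 c2 A \<theta> = - 2 * c1 * Arot A \<theta>$1$1 - 2 * c2 * tr2 (Arot A \<theta>)"
definition L2 :: "real \<Rightarrow> mat2 \<Rightarrow> real \<Rightarrow> real" where
  "L2 c1 A \<theta> = - 2 * c1 * (Arot A \<theta>$1$2 + Arot A \<theta>$2$1)"
definition L3 :: "real \<Rightarrow> real \<Rightarrow> mat2 \<Rightarrow> real \<Rightarrow> real" where
  "L3 c1 c2 A \<theta> = - 2 * c1 * Arot A \<theta>$2$2 - 2 * c2 * tr2 (Arot A \<theta>)"

lemma Ltheta_mk': "Ltheta c1 c2 A e \<theta> (mk p q r) =
   LC c1 c2 A e \<theta> + p * L1 c1 c2 A \<theta> + q * L2 c1 A \<theta> + r * L3 c1 c2 A \<theta>"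
  unfolding Ltheta_mk LC_def L1_def L2_def L3_def by (simp add: algebra_simps)

lemma affine_comb: "t*(k0 + k1*x1 + k2*y1 + k3*z1) + (1-t)*(k0 + k1*x2 + k2*y2 + k3*z2)
   = k0 + k1*(t*x1+(1-t)*x2) + k2*(t*y1+(1-t)*y2) + k3*(t*z1+(1-t)*z2)" for t k0 k1 k2 k3 x1 x2 y1 y2 z1 z2 :: real
  by (simp add: algebra_simps)

lemma tr2_frob: "tr2 X = frob X (mat 1)"
  unfolding tr2_def frob_expand by (simp add: mat_def)

lemma integrable_Ltheta:
  assumes fm: "finite_measure N" and Xm: "X \<in> borel_measurable N" and Xi: "integrable N (\<lambda>x. fnorm2 (X x))"
  shows "integrable N (\<lambda>x. Ltheta c1 c2 A e \<theta> (X x))"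
proof -
  define B where "B = Arot A \<theta>"
  have int_frob: "integrable N (\<lambda>x. frob (X x) Y)" for Y
  proof (rule Bochner_Integration.integrable_bound)
    show "integrable N (\<lambda>x. fnorm2 (X x) + fnorm2 Y)"
      using Xi finite_measure.integrable_const[OF fm] by (intro Bochner_Integration.integrable_add) auto
    show "(\<lambda>x. frob (X x) Y) \<in> borel_measurable N" using meas_frob[OF Xm, of "\<lambda>x. Y"] by simp
    have "fnorm2 Z \<ge> 0" for Z unfolding fnorm2_expand by simp
    then show "AE x in N. norm (frob (X x) Y) \<le> norm (fnorm2 (X x) + fnorm2 Y)"
      using frob_bound[of "X x" Y for x] by (auto intro!: AE_I2)
  qed
  have eq: "Ltheta c1 c2 A e \<theta> (X x) = (- 2 * c1) * frob (X x) B + (- 2 * c2 * tr2 B) * frob (X x) (mat 1)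
     + (c1 * fnorm2 B + c2 * (tr2 B)^2 + e)" for x
    unfolding Ltheta_def B_def tr2_frob[of "X x"] by (simp add: algebra_simps)
  show ?thesis unfolding eq
    using int_frob finite_measure.integrable_const[OF fm]
    by (intro Bochner_Integration.integrable_add integrable_mult_right) auto
qed

lemma frob_comb: "frob (mk (Qp p q r) (Qq p q r) (Qr p q r)) G + tt p q r * (frob (mk (Pp p q r) (Pq p q r) (Pr p q r)) G
   - frob (mk (Qp p q r) (Qq p q r) (Qr p q r)) G) = frob (mk p q r) G"
proof -
  have "frob (mk p q r) G = frob (mk (tt p q r * Pp p q r + (1 - tt p q r) * Qp p q r)
     (tt p q r * Pq p q r + (1 - tt p q r) * Qq p q r) (tt p q r * Pr p q r + (1 - tt p q r) * Qr p q r)) G"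
    using comb by simp
  then show ?thesis by (simp add: frob_mk algebra_simps)
qed

lemma ring_R: "c*nQ + (LC + Q1*L1 + Q2*L2 + Q3*L3) + t*((c*nP + (LC + P1*L1 + P2*L2 + P3*L3)) - (c*nQ + (LC + Q1*L1 + Q2*L2 + Q3*L3)))
  = c*(t*nP+(1-t)*nQ) + LC + L1*(t*P1+(1-t)*Q1) + L2*(t*P2+(1-t)*Q2) + L3*(t*P3+(1-t)*Q3)"
  for c nQ nP LC Q1 Q2 Q3 P1 P2 P3 L1 L2 L3 t :: real
  by (simp add: algebra_simps)

lemma energy_comb:
  "c * fnorm2 (mk (Qp p q r) (Qq p q r) (Qr p q r)) + Ltheta c1 c2 A e \<theta> (mk (Qp p q r) (Qq p q r) (Qr p q r))
   + tt p q r * ((c * fnorm2 (mk (Pp p q r) (Pq p q r) (Pr p q r)) + Ltheta c1 c2 A e \<theta> (mk (Pp p q r) (Pq p q r) (Pr p q r)))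
       - (c * fnorm2 (mk (Qp p q r) (Qq p q r) (Qr p q r)) + Ltheta c1 c2 A e \<theta> (mk (Qp p q r) (Qq p q r) (Qr p q r))))
   = c * fnorm2 (mk p q r) + 2 * c * \<bar>det (mk p q r)\<bar> + Ltheta c1 c2 A e \<theta> (mk p q r)"
  unfolding fnorm2_mk Ltheta_mk' det_mk
  apply (subst ring_R)
  unfolding energy comb by (simp add: algebra_simps)

lemma main_gen:
  fixes c1 c2 e \<theta> a b :: real and A :: mat2 and M :: "real \<Rightarrow> mat2"
  assumes c1: "c1 > 0" and c2: "c2 > 0"
    and hML: "L2sym {a<..<b} M"
  shows "\<exists>Ms :: nat \<Rightarrow> real \<Rightarrow> mat2.
     (\<forall>n. L2sym {a<..<b} (Ms n))
   \<and> (\<forall>n. AE x in lebesgue_on {a<..<b}. det (Ms n x) = 0)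
   \<and> weak_L2 {a<..<b} Ms M
   \<and> (\<lambda>n. integral\<^sup>L (lebesgue_on {a<..<b})
          (\<lambda>x. (c1 + c2) * fnorm2 (Ms n x) + Ltheta c1 c2 A e \<theta> (Ms n x)))
     \<longlonglongrightarrow> integral\<^sup>L (lebesgue_on {a<..<b})
          (\<lambda>x. (c1 + c2) * fnorm2 (M x) + 2 * (c1 + c2) * \<bar>det (M x)\<bar>
               + Ltheta c1 c2 A e \<theta> (M x))"
proof -
  define \<mu> where "\<mu> = lebesgue_on {a<..<b}"
  have fm: "finite_measure \<mu>" unfolding \<mu>_def by (simp add: finite_measure_lebesgue_on)
  have Mm: "M \<in> borel_measurable \<mu>" and Mi: "integrable \<mu> (\<lambda>x. fnorm2 (M x))"
    and Ms: "AE x in \<mu>. symmetric2 (M x)"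
    using hML unfolding L2sym_def \<mu>_def by auto
  define p where "p x = M x $ 1 $ 1" for x
  define q where "q x = M x $ 1 $ 2" for x
  define r where "r x = M x $ 2 $ 2" for x
  have pm: "p \<in> borel_measurable \<mu>" "q \<in> borel_measurable \<mu>" "r \<in> borel_measurable \<mu>"
    unfolding p_def q_def r_def using meas_nth2[OF Mm] by auto
  note mp = meas_ppp[OF pm]
  define t where "t x = tt (p x) (q x) (r x)" for x
  have tm: "t \<in> borel_measurable (lebesgue_on {a<..<b})" using mp(1) unfolding t_def \<mu>_def .
  obtain chi :: "nat \<Rightarrow> real \<Rightarrow> bool" where
    chim: "\<And>n. Measurable.pred \<mu> (chi n)" and
    chil: "\<And>h. integrable \<mu> h \<Longrightarrow>
       (\<lambda>n. \<integral>x. (if chi n x then h x else 0) \<partial>\<mu>) \<longlonglongrightarrow> (\<integral>x. t x * h x \<partial>\<mu>)"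
    using osc[OF tm, of thesis] tt_range unfolding t_def \<mu>_def by blast
  define Pm where "Pm x = mk (Pp (p x) (q x) (r x)) (Pq (p x) (q x) (r x)) (Pr (p x) (q x) (r x))" for x
  define Qm where "Qm x = mk (Qp (p x) (q x) (r x)) (Qq (p x) (q x) (r x)) (Qr (p x) (q x) (r x))" for x
  define M' where "M' x = mk (p x) (q x) (r x)" for x
  define Ms where "Ms n x = (if chi n x then Pm x else Qm x)" for n x
  have fn0: "fnorm2 Z \<ge> 0" for Z unfolding fnorm2_expand by simp
  have Pmm: "Pm \<in> borel_measurable \<mu>" unfolding Pm_def by (intro meas_mk mp)
  have Qmm: "Qm \<in> borel_measurable \<mu>" unfolding Qm_def by (intro meas_mk mp)
  have Mmm: "M' \<in> borel_measurable \<mu>" unfolding M'_def by (intro meas_mk pm)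
  have Msm: "Ms n \<in> borel_measurable \<mu>" for n
    unfolding Ms_def by (rule measurable_If[OF Pmm Qmm]) (use chim in \<open>simp add: pred_def\<close>)
  have M'M: "fnorm2 (M' x) \<le> 2 * fnorm2 (M x)" for x
    unfolding M'_def fnorm2_mk unfolding fnorm2_expand p_def q_def r_def
    using zero_le_power2[of "M x $ 1 $ 1"] zero_le_power2[of "M x $ 2 $ 1"] zero_le_power2[of "M x $ 2 $ 2"]
    by (smt (verit))
  have Pb: "fnorm2 (Pm x) \<le> 12 * fnorm2 (M x)" for x
    using Pbound[of "p x" "q x" "r x"] M'M[of x] unfolding Pm_def fnorm2_mk M'_def by (smt (verit))
  have Qb: "fnorm2 (Qm x) \<le> 12 * fnorm2 (M x)" for x
    using Qbound[of "p x" "q x" "r x"] M'M[of x] unfolding Qm_def fnorm2_mk M'_def by (smt (verit))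
  have int12: "integrable \<mu> (\<lambda>x. 12 * fnorm2 (M x))" using Mi by simp
  have intbound: "integrable \<mu> (\<lambda>x. fnorm2 (Z x))" 
    if "Z \<in> borel_measurable \<mu>" "\<And>x. fnorm2 (Z x) \<le> 12 * fnorm2 (M x)" for Z
  proof (rule Bochner_Integration.integrable_bound[OF int12])
    show "(\<lambda>x. fnorm2 (Z x)) \<in> borel_measurable \<mu>" by (rule meas_fnorm2[OF that(1)])
    show "AE x in \<mu>. norm (fnorm2 (Z x)) \<le> norm (12 * fnorm2 (M x))"
      using that(2) fn0 by (intro AE_I2) (simp add: abs_of_nonneg)
  qed
  have Pi: "integrable \<mu> (\<lambda>x. fnorm2 (Pm x))" by (rule intbound[OF Pmm Pb])
  have Qi: "integrable \<mu> (\<lambda>x. fnorm2 (Qm x))" by (rule intbound[OF Qmm Qb])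
  have Msi: "integrable \<mu> (\<lambda>x. fnorm2 (Ms n x))" for n
    by (rule intbound[OF Msm]) (simp add: Ms_def Pb Qb)
  have AEM: "AE x in \<mu>. M x = M' x"
    using Ms by eventually_elim (simp add: M'_def p_def q_def r_def sym_eq_mk[symmetric])
  have A1: "\<forall>n. L2sym {a<..<b} (Ms n)"
    unfolding L2sym_def using Msm Msi \<mu>_def
    by (auto intro!: AE_I2 simp: Ms_def Pm_def Qm_def mk_sym)
  have A2: "\<forall>n. AE x in lebesgue_on {a<..<b}. det (Ms n x) = 0"
    using P_det Q_det by (auto intro!: AE_I2 simp: Ms_def Pm_def Qm_def det_mk)
  have A3: "weak_L2 {a<..<b} Ms M"
    unfolding weak_L2_def
  proof (intro allI impI)
    fix g assume gL: "L2sym {a<..<b} g"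
    have gm: "g \<in> borel_measurable \<mu>" and gi: "integrable \<mu> (\<lambda>x. fnorm2 (g x))"
      using gL unfolding L2sym_def \<mu>_def by auto
    have intfr: "integrable \<mu> (\<lambda>x. frob (Z x) (g x))"
      if "Z \<in> borel_measurable \<mu>" "integrable \<mu> (\<lambda>x. fnorm2 (Z x))" for Z
    proof (rule Bochner_Integration.integrable_bound)
      show "integrable \<mu> (\<lambda>x. fnorm2 (Z x) + fnorm2 (g x))"
        using that(2) gi by (rule Bochner_Integration.integrable_add)
      show "(\<lambda>x. frob (Z x) (g x)) \<in> borel_measurable \<mu>" by (rule meas_frob[OF that(1) gm])
      show "AE x in \<mu>. norm (frob (Z x) (g x)) \<le> norm (fnorm2 (Z x) + fnorm2 (g x))"
        using frob_bound fn0 by (intro AE_I2) (simp add: add_nonneg_nonneg abs_of_nonneg)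
    qed
    have iP: "integrable \<mu> (\<lambda>x. frob (Pm x) (g x))" by (rule intfr[OF Pmm Pi])
    have iQ: "integrable \<mu> (\<lambda>x. frob (Qm x) (g x))" by (rule intfr[OF Qmm Qi])
    define h where "h x = frob (Pm x) (g x) - frob (Qm x) (g x)" for x
    have ih: "integrable \<mu> h" unfolding h_def using iP iQ by (rule Bochner_Integration.integrable_diff)
    have ihc: "integrable \<mu> (\<lambda>x. if chi n x then h x else 0)" for n
    proof (rule Bochner_Integration.integrable_bound[OF ih])
      show "(\<lambda>x. if chi n x then h x else 0) \<in> borel_measurable \<mu>"
        by (rule measurable_If[OF borel_measurable_integrable[OF ih] borel_measurable_const])
           (use chim in \<open>simp add: pred_def\<close>)
      show "AE x in \<mu>. norm (if chi n x then h x else 0) \<le> norm (h x)" by (intro AE_I2) auto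
    qed
    have eqn: "(\<integral>x. frob (Ms n x) (g x) \<partial>\<mu>) = (\<integral>x. frob (Qm x) (g x) \<partial>\<mu>) + (\<integral>x. (if chi n x then h x else 0) \<partial>\<mu>)" for n
    proof -
      have "(\<integral>x. frob (Ms n x) (g x) \<partial>\<mu>) = (\<integral>x. frob (Qm x) (g x) + (if chi n x then h x else 0) \<partial>\<mu>)"
        by (rule Bochner_Integration.integral_cong) (auto simp: Ms_def h_def)
      also have "\<dots> = (\<integral>x. frob (Qm x) (g x) \<partial>\<mu>) + (\<integral>x. (if chi n x then h x else 0) \<partial>\<mu>)"
        by (rule Bochner_Integration.integral_add[OF iQ ihc])
      finally show ?thesis .
    qed
    have lim: "(\<lambda>n. \<integral>x. frob (Ms n x) (g x) \<partial>\<mu>) \<longlonglongrightarrow> (\<integral>x. frob (Qm x) (g x) \<partial>\<mu>) + (\<integral>x. t x * h x \<partial>\<mu>)"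
      unfolding eqn by (intro tendsto_add tendsto_const chil[OF ih])
    have ith: "integrable \<mu> (\<lambda>x. t x * h x)"
    proof (rule Bochner_Integration.integrable_bound[OF ih])
      show "(\<lambda>x. t x * h x) \<in> borel_measurable \<mu>"
        using borel_measurable_times[OF mp(1) borel_measurable_integrable[OF ih]] unfolding t_def .
      show "AE x in \<mu>. norm (t x * h x) \<le> norm (h x)"
        using tt_range by (intro AE_I2) (simp add: abs_mult t_def mult_left_le_one_le)
    qed
    have "(\<integral>x. frob (Qm x) (g x) \<partial>\<mu>) + (\<integral>x. t x * h x \<partial>\<mu>) = (\<integral>x. frob (Qm x) (g x) + t x * h x \<partial>\<mu>)"
      by (rule Bochner_Integration.integral_add[OF iQ ith, symmetric])
    also have "\<dots> = (\<integral>x. frob (M' x) (g x) \<partial>\<mu>)"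
    proof (rule Bochner_Integration.integral_cong[OF refl])
      fix x
      show "frob (Qm x) (g x) + t x * h x = frob (M' x) (g x)"
        unfolding h_def Pm_def Qm_def M'_def t_def by (rule frob_comb)
    qed
    also have "\<dots> = (\<integral>x. frob (M x) (g x) \<partial>\<mu>)"
    proof (rule integral_cong_AE)
      show "(\<lambda>x. frob (M' x) (g x)) \<in> borel_measurable \<mu>" by (rule meas_frob[OF Mmm gm])
      show "(\<lambda>x. frob (M x) (g x)) \<in> borel_measurable \<mu>" by (rule meas_frob[OF Mm gm])
      show "AE x in \<mu>. frob (M' x) (g x) = frob (M x) (g x)" using AEM by eventually_elim simp
    qed
    finally show "(\<lambda>n. integral\<^sup>L (lebesgue_on {a<..<b}) (\<lambda>x. frob (Ms n x) (g x)))
         \<longlonglongrightarrow> integral\<^sup>L (lebesgue_on {a<..<b}) (\<lambda>x. frob (M x) (g x))"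
      using lim unfolding \<mu>_def by simp
  qed
  define E where "E X = (c1 + c2) * fnorm2 X + Ltheta c1 c2 A e \<theta> X" for X
  have intE: "integrable \<mu> (\<lambda>x. E (Z x))"
    if "Z \<in> borel_measurable \<mu>" "integrable \<mu> (\<lambda>x. fnorm2 (Z x))" for Z
    unfolding E_def using that integrable_Ltheta[OF fm that]
    by (intro Bochner_Integration.integrable_add integrable_mult_right) auto
  have iEP: "integrable \<mu> (\<lambda>x. E (Pm x))" by (rule intE[OF Pmm Pi])
  have iEQ: "integrable \<mu> (\<lambda>x. E (Qm x))" by (rule intE[OF Qmm Qi])
  define h where "h x = E (Pm x) - E (Qm x)" for x
  have ih: "integrable \<mu> h" unfolding h_def using iEP iEQ by (rule Bochner_Integration.integrable_diff)
  have ihc: "integrable \<mu> (\<lambda>x. if chi n x then h x else 0)" for n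
  proof (rule Bochner_Integration.integrable_bound[OF ih])
    show "(\<lambda>x. if chi n x then h x else 0) \<in> borel_measurable \<mu>"
      by (rule measurable_If[OF borel_measurable_integrable[OF ih] borel_measurable_const])
         (use chim in \<open>simp add: pred_def\<close>)
    show "AE x in \<mu>. norm (if chi n x then h x else 0) \<le> norm (h x)" by (intro AE_I2) auto
  qed
  have eqn: "(\<integral>x. E (Ms n x) \<partial>\<mu>) = (\<integral>x. E (Qm x) \<partial>\<mu>) + (\<integral>x. (if chi n x then h x else 0) \<partial>\<mu>)" for n
  proof -
    have "(\<integral>x. E (Ms n x) \<partial>\<mu>) = (\<integral>x. E (Qm x) + (if chi n x then h x else 0) \<partial>\<mu>)"
      by (rule Bochner_Integration.integral_cong) (auto simp: Ms_def h_def)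
    also have "\<dots> = (\<integral>x. E (Qm x) \<partial>\<mu>) + (\<integral>x. (if chi n x then h x else 0) \<partial>\<mu>)"
      by (rule Bochner_Integration.integral_add[OF iEQ ihc])
    finally show ?thesis .
  qed
  have lim: "(\<lambda>n. \<integral>x. E (Ms n x) \<partial>\<mu>) \<longlonglongrightarrow> (\<integral>x. E (Qm x) \<partial>\<mu>) + (\<integral>x. t x * h x \<partial>\<mu>)"
    unfolding eqn by (intro tendsto_add tendsto_const chil[OF ih])
  have ith: "integrable \<mu> (\<lambda>x. t x * h x)"
  proof (rule Bochner_Integration.integrable_bound[OF ih])
    show "(\<lambda>x. t x * h x) \<in> borel_measurable \<mu>"
      using borel_measurable_times[OF mp(1) borel_measurable_integrable[OF ih]] unfolding t_def .
    show "AE x in \<mu>. norm (t x * h x) \<le> norm (h x)"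
      using tt_range by (intro AE_I2) (simp add: abs_mult t_def mult_left_le_one_le)
  qed
  define G where "G X = (c1 + c2) * fnorm2 X + 2 * (c1 + c2) * \<bar>det X\<bar> + Ltheta c1 c2 A e \<theta> X" for X
  have "(\<integral>x. E (Qm x) \<partial>\<mu>) + (\<integral>x. t x * h x \<partial>\<mu>) = (\<integral>x. E (Qm x) + t x * h x \<partial>\<mu>)"
    by (rule Bochner_Integration.integral_add[OF iEQ ith, symmetric])
  also have "\<dots> = (\<integral>x. G (M' x) \<partial>\<mu>)"
  proof (rule Bochner_Integration.integral_cong[OF refl])
    fix x
    show "E (Qm x) + t x * h x = G (M' x)"
      unfolding h_def Pm_def Qm_def M'_def t_def E_def G_def by (rule energy_comb)
  qed
  also have "\<dots> = (\<integral>x. G (M x) \<partial>\<mu>)"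
  proof (rule integral_cong_AE)
    have gm: "G \<in> borel_measurable borel" unfolding G_def Ltheta_def frob_expand tr2_def fnorm2_expand det_2
      by (intro borel_measurable_add borel_measurable_diff borel_measurable_times borel_measurable_abs
           borel_measurable_power borel_measurable_const borel_measurable_uminus meas_nth2 measurable_ident_sets refl)
    show "(\<lambda>x. G (M' x)) \<in> borel_measurable \<mu>" using measurable_compose[OF Mmm gm] .
    show "(\<lambda>x. G (M x)) \<in> borel_measurable \<mu>" using measurable_compose[OF Mm gm] .
    show "AE x in \<mu>. G (M' x) = G (M x)" using AEM by eventually_elim simp
  qed
  finally have A4: "(\<lambda>n. integral\<^sup>L (lebesgue_on {a<..<b})
          (\<lambda>x. (c1 + c2) * fnorm2 (Ms n x) + Ltheta c1 c2 A e \<theta> (Ms n x)))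
     \<longlonglongrightarrow> integral\<^sup>L (lebesgue_on {a<..<b})
          (\<lambda>x. (c1 + c2) * fnorm2 (M x) + 2 * (c1 + c2) * \<bar>det (M x)\<bar>
               + Ltheta c1 c2 A e \<theta> (M x))"
    using lim unfolding \<mu>_def E_def G_def by simp
  show ?thesis using A1 A2 A3 A4 by blast
qed


theorem lemma2p3:
  fixes c1 c2 e \<theta> l :: real and A :: mat2 and M :: "real \<Rightarrow> mat2"
  assumes "c1 > 0" and "c2 > 0" and "symmetric2 A" and "e \<ge> 0"
    and "0 \<le> \<theta>" and "\<theta> < pi" and "l > 0"
    and "L2sym {-l/2<..<l/2} M"
  shows "\<exists>Ms :: nat \<Rightarrow> real \<Rightarrow> mat2.
     (\<forall>n. L2sym {-l/2<..<l/2} (Ms n))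
   \<and> (\<forall>n. AE x in lebesgue_on {-l/2<..<l/2}. det (Ms n x) = 0)
   \<and> weak_L2 {-l/2<..<l/2} Ms M
   \<and> (\<lambda>n. integral\<^sup>L (lebesgue_on {-l/2<..<l/2})
          (\<lambda>x. (c1 + c2) * fnorm2 (Ms n x) + Ltheta c1 c2 A e \<theta> (Ms n x)))
     \<longlonglongrightarrow> integral\<^sup>L (lebesgue_on {-l/2<..<l/2})
          (\<lambda>x. (c1 + c2) * fnorm2 (M x) + 2 * (c1 + c2) * \<bar>det (M x)\<bar>
               + Ltheta c1 c2 A e \<theta> (M x))"
  by (rule main_gen[OF assms(1) assms(2) assms(8)])

end
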